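(* Let $n\ge 1$ and let $\mathcal{I}$ be an interval hypergraph on $[n]$ containing all singletons $\{i\}$, $i\in[n]$. Then the hypergraphic poset $P_{\mathcal{I}}$ is a lattice if and only if $\mathcal{I}$ is closed under intersection, i.e. $I,J\in\mathcal{I}$ and $I\cap J\neq\varnothing$ imply $I\cap J\in\mathcal{I}$.
   Context: A hypergraph $\mathcal{H}$ on $[n]=\{1,\dots,n\}$ is a collection of subsets of $[n]$; by convention it contains all singletons. An interval hypergraph is a hypergraph all of whose members are intervals $[i,j]=\{i,i+1,\dots,j\}$. An orientation of $\mathcal{H}$ is a map $O:\mathcal{H}\to[n]$ with $O(H)\in H$ for all $H$. It is acyclic if there are no $H_1,\dots,H_k\in\mathcal{H}$, $k\ge2$, with $O(H_{i+1})\in H_i\setminus\{O(H_i)\}$ for $i\in[k-1]$ and $O(H_1)\in H_k\setminus\{O(H_k)\}$. Two orientations $O\neq O'$ are related by an increasing flip (from $O$ to $O'$) if there exist $1\le i<j\le n$ such that for all $H\in\mathcal{H}$: if $O(H)\ne O'(H)$ then $O(H)=i$ and $O'(H)=j$; and if $\{i,j\}\subseteq H$ then $O(H)=i\iff O'(H)=j$. The hypergraphic poset $P_{\mathcal{H}}$ is the transitive closure of the increasing flip relation on the set of acyclic orientations of $\mathcal{H}$ (equivalently, the transitive closure of the graph of the polytope $\sum_{H\in\mathcal{H}}\mathrm{conv}\{e_h:h\in H\}$ oriented in the direction $(n-1,n-3,\dots,1-n)$). *)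

theory Defs
  imports "HOL-Library.FuncSet"
begin

definition interval_hypergraph :: "nat \<Rightarrow> nat set set \<Rightarrow> bool" where
  "interval_hypergraph n \<H> \<longleftrightarrow>
     (\<forall>H\<in>\<H>. \<exists>i j. 1 \<le> i \<and> i \<le> j \<and> j \<le> n \<and> H = {i..j})"

definition contains_singletons :: "nat \<Rightarrow> nat set set \<Rightarrow> bool" where
  "contains_singletons n \<H> \<longleftrightarrow> (\<forall>i\<in>{1..n}. {i} \<in> \<H>)"

definition closed_under_intersection :: "nat set set \<Rightarrow> bool" where
  "closed_under_intersection \<H> \<longleftrightarrow>
     (\<forall>I\<in>\<H>. \<forall>J\<in>\<H>. I \<inter> J \<noteq> {} \<longrightarrow> I \<inter> J \<in> \<H>)"

definition orientations :: "nat set set \<Rightarrow> (nat set \<Rightarrow> nat) set" where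
  "orientations \<H> = (\<Pi>\<^sub>E H\<in>\<H>. H)"

(* A cycle H_1,...,H_k (k >= 2), given as a list hs with hs!0 = H_1 *)
definition acyclic_orientation :: "nat set set \<Rightarrow> (nat set \<Rightarrow> nat) \<Rightarrow> bool" where
  "acyclic_orientation \<H> P \<longleftrightarrow> P \<in> orientations \<H> \<and>
     \<not> (\<exists>hs. length hs \<ge> 2 \<and> set hs \<subseteq> \<H> \<and>
          (\<forall>i. Suc i < length hs \<longrightarrow> P (hs ! Suc i) \<in> hs ! i - {P (hs ! i)}) \<and>
          P (hs ! 0) \<in> last hs - {P (last hs)})"

definition increasing_flip ::
  "nat \<Rightarrow> nat set set \<Rightarrow> (nat set \<Rightarrow> nat) \<Rightarrow> (nat set \<Rightarrow> nat) \<Rightarrow> bool" where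
  "increasing_flip n \<H> P Q \<longleftrightarrow> P \<noteq> Q \<and>
     (\<exists>i j. 1 \<le> i \<and> i < j \<and> j \<le> n \<and>
        (\<forall>H\<in>\<H>. (P H \<noteq> Q H \<longrightarrow> P H = i \<and> Q H = j) \<and>
                 ({i, j} \<subseteq> H \<longrightarrow> (P H = i \<longleftrightarrow> Q H = j))))"

definition acyclic_orientations :: "nat set set \<Rightarrow> (nat set \<Rightarrow> nat) set" where
  "acyclic_orientations \<H> = {P. acyclic_orientation \<H> P}"

definition hg_less :: "nat \<Rightarrow> nat set set \<Rightarrow> ((nat set \<Rightarrow> nat) \<times> (nat set \<Rightarrow> nat)) set" where
  "hg_less n \<H> = {(P, Q). P \<in> acyclic_orientations \<H> \<and> Q \<in> acyclic_orientations \<H>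
                          \<and> increasing_flip n \<H> P Q}\<^sup>+"

definition hg_le :: "nat \<Rightarrow> nat set set \<Rightarrow> (nat set \<Rightarrow> nat) \<Rightarrow> (nat set \<Rightarrow> nat) \<Rightarrow> bool" where
  "hg_le n \<H> P Q \<longleftrightarrow> P = Q \<or> (P, Q) \<in> hg_less n \<H>"

definition is_lattice_on :: "'a set \<Rightarrow> ('a \<Rightarrow> 'a \<Rightarrow> bool) \<Rightarrow> bool" where
  "is_lattice_on A le \<longleftrightarrow>
     (\<forall>x\<in>A. le x x) \<and>
     (\<forall>x\<in>A. \<forall>y\<in>A. \<forall>z\<in>A. le x y \<longrightarrow> le y z \<longrightarrow> le x z) \<and>
     (\<forall>x\<in>A. \<forall>y\<in>A. le x y \<longrightarrow> le y x \<longrightarrow> x = y) \<and>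
     (\<forall>x\<in>A. \<forall>y\<in>A. \<exists>s\<in>A. le x s \<and> le y s \<and> (\<forall>u\<in>A. le x u \<longrightarrow> le y u \<longrightarrow> le s u)) \<and>
     (\<forall>x\<in>A. \<forall>y\<in>A. \<exists>m\<in>A. le m x \<and> le m y \<and> (\<forall>u\<in>A. le u x \<longrightarrow> le u y \<longrightarrow> le u m))"

definition hypergraphic_poset_is_lattice :: "nat \<Rightarrow> nat set set \<Rightarrow> bool" where
  "hypergraphic_poset_is_lattice n \<H> \<longleftrightarrow> is_lattice_on (acyclic_orientations \<H>) (hg_le n \<H>)"

end

theory Submission
  imports Defs
begin


definition consist :: "nat set set \<Rightarrow> (nat set \<Rightarrow> nat) \<Rightarrow> bool" where
  "consist \<I> P \<longleftrightarrow> (\<forall>H\<in>\<I>. \<forall>K\<in>\<I>. P H \<in> K \<longrightarrow> P K \<in> H \<longrightarrow> P H = P K)"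

lemma iv_form:
  assumes "interval_hypergraph n \<I>" "H \<in> \<I>"
  shows "\<exists>i j. 1 \<le> i \<and> i \<le> j \<and> j \<le> n \<and> H = {i..j}"
  using assms unfolding interval_hypergraph_def by blast

lemma iv_convex:
  assumes "interval_hypergraph n \<I>" "H \<in> \<I>" "x \<in> H" "y \<in> H" "x \<le> z" "z \<le> y"
  shows "z \<in> H"
  using iv_form[OF assms(1,2)] assms(3-6) by auto

lemma iv_sub:
  assumes "interval_hypergraph n \<I>" "H \<in> \<I>"
  shows "H \<subseteq> {1..n}" "H \<noteq> {}" "finite H"
  using iv_form[OF assms(1,2)] by auto

lemma iv_finite:
  assumes "interval_hypergraph n \<I>"
  shows "finite \<I>"
proof -
  have "\<I> \<subseteq> Pow {1..n}" using iv_sub[OF assms] by blast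
  thus ?thesis using finite_subset by blast
qed

lemma orient_mem: "P \<in> orientations \<I> \<Longrightarrow> H \<in> \<I> \<Longrightarrow> P H \<in> H"
  unfolding orientations_def by auto

lemma cyc_false:
  assumes iv: "interval_hypergraph n \<I>" and c: "consist \<I> P" and o: "\<And>H. H \<in> \<I> \<Longrightarrow> P H \<in> H"
  shows "length hs = k \<Longrightarrow> 2 \<le> k \<Longrightarrow> set hs \<subseteq> \<I> \<Longrightarrow>
    (\<forall>i<k. P (hs!((i+1) mod k)) \<in> hs!i \<and> P (hs!((i+1) mod k)) \<noteq> P (hs!i)) \<Longrightarrow> False"
proof (induction k arbitrary: hs rule: less_induct)
  case (less k)
  have mem: "\<And>i. i < k \<Longrightarrow> hs!i \<in> \<I>" using less.prems(1,3) nth_mem by blast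
  show False
  proof (cases "k = 2")
    case True
    have "P (hs!1) \<in> hs!0" "P (hs!1) \<noteq> P(hs!0)" using less.prems(4)[rule_format, of 0] True by auto
    moreover have "P (hs!0) \<in> hs!1" using less.prems(4)[rule_format, of 1] True by auto
    moreover have "hs!0 \<in> \<I>" "hs!1 \<in> \<I>" using mem True by auto
    ultimately show False using c unfolding consist_def by metis
  next
    case False
    hence k3: "3 \<le> k" using less.prems by auto
    define T where "T = (\<lambda>i. P (hs!i)) ` {..<k}"
    have "finite T" "T \<noteq> {}" using k3 unfolding T_def by (auto simp: lessThan_empty_iff)
    hence "Max T \<in> T" by simp
    then obtain m where m: "m < k" "P (hs!m) = Max T" unfolding T_def by auto
    define gs where "gs = rotate m hs"
    have len: "length gs = k" using less.prems(1) by (simp add: gs_def)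
    have gsn: "\<And>i. i < k \<Longrightarrow> gs!i = hs!((m+i) mod k)"
      using less.prems(1) by (simp add: gs_def nth_rotate)
    have gmax: "\<And>i. i<k \<Longrightarrow> P(gs!i) \<le> P(gs!0)"
    proof -
      fix i assume "i < k"
      have "P (gs!i) \<in> T" unfolding T_def using gsn[OF \<open>i<k\<close>] k3 by auto
      hence "P (gs!i) \<le> Max T" using \<open>finite T\<close> by simp
      thus "P(gs!i) \<le> P(gs!0)" using gsn[of 0] m k3 by simp
    qed
    have gcond: "\<And>i. i<k \<Longrightarrow> P (gs!((i+1) mod k)) \<in> gs!i \<and> P (gs!((i+1) mod k)) \<noteq> P (gs!i)"
    proof -
      fix i assume i: "i < k"
      define j where "j = (m+i) mod k"
      have j: "j < k" using k3 by (simp add: j_def)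
      have "gs!((i+1) mod k) = hs!((m + (i+1) mod k) mod k)" using gsn k3 by simp
      also have "(m + (i+1) mod k) mod k = (j+1) mod k" unfolding j_def by (simp add: mod_simps)
      finally have e: "gs!((i+1) mod k) = hs!((j+1) mod k)" .
      have "gs!i = hs!j" using gsn[OF i] j_def by simp
      thus "P (gs!((i+1) mod k)) \<in> gs!i \<and> P (gs!((i+1) mod k)) \<noteq> P (gs!i)"
        using e less.prems(4) j by simp
    qed
    have gmem: "\<And>i. i < k \<Longrightarrow> gs!i \<in> \<I>" using gsn mem k3 by simp
    define fs where "fs = tl gs"
    have flen: "length fs = k - 1" using len by (simp add: fs_def)
    have fsn: "\<And>i. i < k - 1 \<Longrightarrow> fs!i = gs!(Suc i)" using len by (simp add: fs_def nth_tl)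
    show False
    proof (rule less.IH[of "k-1" fs])
      show "k - 1 < k" "length fs = k - 1" "2 \<le> k - 1" using k3 flen by auto
      show "set fs \<subseteq> \<I>" using less.prems(3) len k3 unfolding fs_def gs_def
        by (metis list.set_sel(2) list.size(3) not_numeral_le_zero set_rotate subset_iff)
      show "\<forall>i<k - 1. P (fs ! ((i + 1) mod (k - 1))) \<in> fs ! i \<and> P (fs ! ((i + 1) mod (k - 1))) \<noteq> P (fs ! i)"
      proof (intro allI impI)
        fix i assume i: "i < k - 1"
        show "P (fs ! ((i + 1) mod (k - 1))) \<in> fs ! i \<and> P (fs ! ((i + 1) mod (k - 1))) \<noteq> P (fs ! i)"
        proof (cases "i < k - 2")
          case True
          have "(i+1) mod (k-1) = i + 1" using True by simp
          moreover have "(Suc i + 1) mod k = Suc (i+1)" using True by simp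
          ultimately show ?thesis using gcond[of "Suc i"] fsn True i by simp
        next
          case False
          hence ik: "i = k - 2" using i by simp
          have "i + 1 = k - 1" using ik k3 by simp
          hence e0: "(i+1) mod (k-1) = 0" by simp
          have fi: "fs!i = gs!(k-1)" using fsn[OF i] ik k3 by (simp add: Suc_diff_Suc numeral_2_eq_2)
          have f0: "fs!0 = gs!1" using fsn[of 0] k3 by simp
          define p where "p = P (gs!(k-1))"
          define s where "s = P (gs!1)"
          define t where "t = P (gs!0)"
          have c1: "t \<in> gs!(k-1)" "t \<noteq> p" using gcond[of "k-1"] k3 unfolding t_def p_def by auto
          have c2: "s \<in> gs!0" "s \<noteq> t" using gcond[of 0] k3 unfolding t_def s_def by auto
          have pt: "p \<le> t" "s \<le> t" using gmax[of "k-1"] gmax[of 1] k3 unfolding t_def p_def s_def by auto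
          have m0: "gs!0 \<in> \<I>" "gs!(k-1) \<in> \<I>" using gmem k3 by auto
          have pin: "p \<in> gs!(k-1)" "t \<in> gs!0" using o m0 unfolding p_def t_def by auto
          have "p \<notin> gs!0" using c m0 c1 pin unfolding consist_def p_def t_def by metis
          hence "p < s" using iv_convex[OF iv m0(1) c2(1) pin(2), of p] pt
            by (metis c2(1) linorder_not_less)
          hence "s \<in> gs!(k-1)" using iv_convex[OF iv m0(2) pin(1) c1(1), of s] pt by simp
          moreover have "s \<noteq> p" using \<open>p < s\<close> by simp
          ultimately show ?thesis using e0 fi f0 unfolding s_def p_def by simp
        qed
      qed
    qed
  qed
qed

lemma acyclic_iff:
  assumes iv: "interval_hypergraph n \<I>"
  shows "acyclic_orientation \<I> P \<longleftrightarrow> P \<in> orientations \<I> \<and> consist \<I> P"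
proof
  assume a: "acyclic_orientation \<I> P"
  hence o: "P \<in> orientations \<I>" unfolding acyclic_orientation_def by simp
  have "consist \<I> P"
    unfolding consist_def
  proof (intro ballI impI)
    fix H K assume HK: "H \<in> \<I>" "K \<in> \<I>" "P H \<in> K" "P K \<in> H"
    show "P H = P K"
    proof (rule ccontr)
      assume ne: "P H \<noteq> P K"
      let ?hs = "[H, K]"
      have "length ?hs \<ge> 2 \<and> set ?hs \<subseteq> \<I> \<and>
          (\<forall>i. Suc i < length ?hs \<longrightarrow> P (?hs ! Suc i) \<in> ?hs ! i - {P (?hs ! i)}) \<and>
          P (?hs ! 0) \<in> last ?hs - {P (last ?hs)}"
        using HK ne by (auto simp: less_Suc_eq)
      thus False using a unfolding acyclic_orientation_def by blast
    qed
  qed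
  thus "P \<in> orientations \<I> \<and> consist \<I> P" using o by simp
next
  assume a: "P \<in> orientations \<I> \<and> consist \<I> P"
  have o: "\<And>H. H \<in> \<I> \<Longrightarrow> P H \<in> H" using a orient_mem by blast
  show "acyclic_orientation \<I> P"
    unfolding acyclic_orientation_def
  proof (intro conjI notI)
    show "P \<in> orientations \<I>" using a by simp
    assume "\<exists>hs. length hs \<ge> 2 \<and> set hs \<subseteq> \<I> \<and>
          (\<forall>i. Suc i < length hs \<longrightarrow> P (hs ! Suc i) \<in> hs ! i - {P (hs ! i)}) \<and>
          P (hs ! 0) \<in> last hs - {P (last hs)}"
    then obtain hs where h: "length hs \<ge> 2" "set hs \<subseteq> \<I>"
      "\<forall>i. Suc i < length hs \<longrightarrow> P (hs ! Suc i) \<in> hs ! i - {P (hs ! i)}"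
      "P (hs ! 0) \<in> last hs - {P (last hs)}" by blast
    define k where "k = length hs"
    have "\<forall>i<k. P (hs!((i+1) mod k)) \<in> hs!i \<and> P (hs!((i+1) mod k)) \<noteq> P (hs!i)"
    proof (intro allI impI)
      fix i assume i: "i < k"
      show "P (hs!((i+1) mod k)) \<in> hs!i \<and> P (hs!((i+1) mod k)) \<noteq> P (hs!i)"
      proof (cases "Suc i < k")
        case True thus ?thesis using h(3) k_def by auto
      next
        case False
        hence "i = k - 1" using i by simp
        moreover have "last hs = hs!(k-1)" using h(1) k_def by (metis last_conv_nth list.size(3) not_numeral_le_zero)
        moreover have "(i+1) mod k = 0" using \<open>i = k - 1\<close> i by simp
        ultimately show ?thesis using h(4) by simp
      qed
    qed
    thus False using cyc_false[OF iv a[THEN conjunct2] o, of hs k] h k_def by simp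
  qed
qed




lemma acyc_mem_iff:
  assumes "interval_hypergraph n \<I>"
  shows "P \<in> acyclic_orientations \<I> \<longleftrightarrow> P \<in> orientations \<I> \<and> consist \<I> P"
  using acyclic_iff[OF assms] unfolding acyclic_orientations_def by simp

lemma flip_le:
  assumes "increasing_flip n \<I> P Q" "H \<in> \<I>"
  shows "P H \<le> Q H"
  using assms unfolding increasing_flip_def by (metis less_imp_le order_refl)

lemma less_le:
  assumes "(P, Q) \<in> hg_less n \<I>" "H \<in> \<I>"
  shows "P H \<le> Q H"
  using assms(1) unfolding hg_less_def
proof (induction rule: trancl_induct)
  case (base y) thus ?case using flip_le assms(2) by blast
next
  case (step y z) thus ?case using flip_le assms(2) by fastforce
qed

lemma orient_ext:
  assumes "P \<in> orientations \<I>" "Q \<in> orientations \<I>" "\<forall>H\<in>\<I>. P H = Q H"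
  shows "P = Q"
  using assms unfolding orientations_def by (meson PiE_ext)

lemma le_to_hg:
  assumes iv: "interval_hypergraph n \<I>"
    and Q: "Q \<in> acyclic_orientations \<I>"
  shows "P \<in> acyclic_orientations \<I> \<Longrightarrow> (\<forall>H\<in>\<I>. P H \<le> Q H) \<Longrightarrow> hg_le n \<I> P Q"
proof (induction "\<Sum>H\<in>\<I>. Q H - P H" arbitrary: P rule: less_induct)
  case less
  have fin: "finite \<I>" using iv_finite[OF iv] .
  have Po: "P \<in> orientations \<I>" and Pc: "consist \<I> P" using less.prems(1) acyc_mem_iff[OF iv] by auto
  have Qo: "Q \<in> orientations \<I>" and Qc: "consist \<I> Q" using Q acyc_mem_iff[OF iv] by auto
  have PH: "\<And>H. H \<in> \<I> \<Longrightarrow> P H \<in> H" using Po orient_mem by blast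
  have QH: "\<And>H. H \<in> \<I> \<Longrightarrow> Q H \<in> H" using Qo orient_mem by blast
  show ?case
  proof (cases "P = Q")
    case True thus ?thesis unfolding hg_le_def by simp
  next
    case False
    define D where "D = {H\<in>\<I>. P H < Q H}"
    have "D \<noteq> {}"
    proof
      assume "D = {}"
      hence "\<forall>H\<in>\<I>. P H = Q H" using less.prems(2) unfolding D_def by force
      thus False using False orient_ext[OF Po Qo] by simp
    qed
    have finD: "finite D" using fin unfolding D_def by simp
    define i where "i = Max (P ` D)"
    have "i \<in> P ` D" unfolding i_def using finD \<open>D \<noteq> {}\<close> by simp
    have imax: "\<And>H. H \<in> D \<Longrightarrow> P H \<le> i" unfolding i_def using finD by simp
    define D2 where "D2 = {H\<in>D. P H = i}"
    have "D2 \<noteq> {}" using \<open>i \<in> P ` D\<close> unfolding D2_def by auto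
    have finD2: "finite D2" using finD unfolding D2_def by simp
    define j where "j = Max (Q ` D2)"
    have "j \<in> Q ` D2" unfolding j_def using finD2 \<open>D2 \<noteq> {}\<close> by simp
    then obtain H1 where H1: "H1 \<in> \<I>" "P H1 = i" "Q H1 = j" "i < j"
      unfolding D2_def D_def by auto
    have jmax: "\<And>H. H \<in> \<I> \<Longrightarrow> P H = i \<Longrightarrow> i < Q H \<Longrightarrow> Q H \<le> j"
      unfolding j_def using finD2 unfolding D2_def D_def by simp
    have F1: "\<And>H. H \<in> \<I> \<Longrightarrow> P H = i \<Longrightarrow> j \<in> H \<Longrightarrow> j \<le> Q H"
    proof (rule ccontr)
      fix H assume H: "H \<in> \<I>" "P H = i" "j \<in> H" "\<not> j \<le> Q H"
      have "i \<le> Q H" using H less.prems(2) by metis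
      have "Q H \<in> H1" using iv_convex[OF iv H1(1), of i j "Q H"] PH[OF H1(1)] QH[OF H1(1)] H1 H \<open>i \<le> Q H\<close> by simp
      hence "Q H = Q H1" using Qc H H1 unfolding consist_def by metis
      thus False using H H1 by simp
    qed
    define P' where "P' = restrict (\<lambda>H. if P H = i \<and> j \<in> H then j else P H) \<I>"
    have P'o: "P' \<in> orientations \<I>" unfolding P'_def orientations_def using PH by auto
    have P'v: "\<And>H. H \<in> \<I> \<Longrightarrow> P' H = (if P H = i \<and> j \<in> H then j else P H)" unfolding P'_def by simp
    have P'c: "consist \<I> P'"
      unfolding consist_def
    proof (intro ballI impI)
      have key: "False" if H: "H \<in> \<I>" "K \<in> \<I>" "P H = i" "j \<in> H" "\<not> (P K = i \<and> j \<in> K)"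
          "j \<in> K" "P K \<in> H" "j \<noteq> P K" for H K
      proof -
        have "P K \<noteq> i" using H by simp
        have "i \<notin> K"
        proof
          assume "i \<in> K"
          hence "P H = P K" using Pc H unfolding consist_def by metis
          thus False using H \<open>P K \<noteq> i\<close> by simp
        qed
        have "i < P K"
        proof (rule ccontr)
          assume "\<not> i < P K"
          hence "P K \<le> i" by simp
          hence "i \<in> K" using iv_convex[OF iv H(2) PH[OF H(2)] H(6), of i] H1(4) by simp
          thus False using \<open>i \<notin> K\<close> by simp
        qed
        have "Q K = P K"
        proof (rule ccontr)
          assume "Q K \<noteq> P K"
          hence "K \<in> D" using less.prems(2) H(2) unfolding D_def by force
          thus False using imax \<open>i < P K\<close> by force
        qed
        have "j \<le> Q H" using F1 H by simp
        have "Q H \<le> j" using jmax[OF H(1) H(3)] \<open>j \<le> Q H\<close> H1(4) by simp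
        hence "Q H = j" using \<open>j \<le> Q H\<close> by simp
        hence "Q H = Q K" using Qc H \<open>Q K = P K\<close> unfolding consist_def by metis
        thus False using \<open>Q H = j\<close> \<open>Q K = P K\<close> H by simp
      qed
      fix H K assume H: "H \<in> \<I>" "K \<in> \<I>" "P' H \<in> K" "P' K \<in> H"
      show "P' H = P' K"
      proof (cases "P H = i \<and> j \<in> H")
        case True note Ht = True
        show ?thesis
        proof (cases "P K = i \<and> j \<in> K")
          case True thus ?thesis using Ht P'v H by simp
        next
          case False thus ?thesis using key[of H K] Ht P'v H by auto
        qed
      next
        case False note Hf = False
        show ?thesis
        proof (cases "P K = i \<and> j \<in> K")
          case True thus ?thesis using key[of K H] Hf P'v H by auto
        next
          case False thus ?thesis using Hf P'v H Pc unfolding consist_def by auto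
        qed
      qed
    qed
    have P'a: "P' \<in> acyclic_orientations \<I>" using P'o P'c acyc_mem_iff[OF iv] by simp
    have P'Q: "\<forall>H\<in>\<I>. P' H \<le> Q H" using P'v F1 less.prems(2) by simp
    have PP': "\<forall>H\<in>\<I>. P H \<le> P' H" using P'v H1(4) by simp
    have P'H1: "P' H1 = j" using P'v[OF H1(1)] H1 PH[OF H1(1)] QH[OF H1(1)] by simp
    have "(\<Sum>H\<in>\<I>. Q H - P' H) < (\<Sum>H\<in>\<I>. Q H - P H)"
    proof (rule sum_strict_mono_ex1[OF fin])
      show "\<forall>x\<in>\<I>. Q x - P' x \<le> Q x - P x" using PP' by (simp add: diff_le_mono2)
      show "\<exists>a\<in>\<I>. Q a - P' a < Q a - P a" using H1 P'H1 by (intro bexI[of _ H1]) auto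
    qed
    hence IH: "hg_le n \<I> P' Q" using less.hyps P'a P'Q by blast
    have flip: "increasing_flip n \<I> P P'"
      unfolding increasing_flip_def
    proof (rule conjI, goal_cases)
      case 2 show ?case
      proof (rule exI[of _ i], rule exI[of _ j], intro conjI)
      show "1 \<le> i" using iv_sub[OF iv H1(1)] PH[OF H1(1)] H1 by auto
      show "i < j" by fact
      show "j \<le> n" using iv_sub[OF iv H1(1)] QH[OF H1(1)] H1 by auto
      show "\<forall>H\<in>\<I>. (P H \<noteq> P' H \<longrightarrow> P H = i \<and> P' H = j) \<and> ({i, j} \<subseteq> H \<longrightarrow> (P H = i) = (P' H = j))"
      proof (intro ballI)
        fix H assume H: "H \<in> \<I>"
        show "(P H \<noteq> P' H \<longrightarrow> P H = i \<and> P' H = j) \<and> ({i, j} \<subseteq> H \<longrightarrow> (P H = i) = (P' H = j))"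
        proof (rule conjI)
          show "P H \<noteq> P' H \<longrightarrow> P H = i \<and> P' H = j" using P'v[OF H] by (auto split: if_splits)
        next
          show "{i, j} \<subseteq> H \<longrightarrow> (P H = i) = (P' H = j)"
          proof
          assume ij: "{i, j} \<subseteq> H"
          show "(P H = i) = (P' H = j)"
          proof
            assume "P H = i" thus "P' H = j" using P'v[OF H] ij by simp
          next
            assume "P' H = j"
            show "P H = i"
            proof (rule ccontr)
              assume "P H \<noteq> i"
              hence "P H = j" using \<open>P' H = j\<close> P'v[OF H] by (auto split: if_splits)
              hence "P H = P H1" using Pc H H1 ij QH[OF H1(1)] unfolding consist_def by (metis insert_subset)
              thus False using H1 \<open>P H = j\<close> by simp
            qed
          qed
          qed
        qed
      qed
      qed
    next
      case 1 show ?case using P'H1 H1 by auto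
    qed
    have "(P, P') \<in> hg_less n \<I>" unfolding hg_less_def using flip less.prems(1) P'a by auto
    moreover have "P' = Q \<or> (P', Q) \<in> hg_less n \<I>" using IH unfolding hg_le_def .
    ultimately have "(P, Q) \<in> hg_less n \<I>" unfolding hg_less_def by auto
    thus ?thesis unfolding hg_le_def by simp
  qed
qed

lemma hg_le_iff:
  assumes iv: "interval_hypergraph n \<I>"
    and P: "P \<in> acyclic_orientations \<I>" and Q: "Q \<in> acyclic_orientations \<I>"
  shows "hg_le n \<I> P Q \<longleftrightarrow> (\<forall>H\<in>\<I>. P H \<le> Q H)"
  using le_to_hg[OF iv Q P] less_le unfolding hg_le_def by auto




definition SD :: "nat set set \<Rightarrow> (nat set \<Rightarrow> nat) \<Rightarrow> bool" where
  "SD \<I> w \<longleftrightarrow> (\<forall>H\<in>\<I>. \<forall>K\<in>\<I>. K \<subseteq> H \<longrightarrow> w H \<in> K \<longrightarrow> w K \<le> w H)"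

definition Tm :: "nat set set \<Rightarrow> (nat set \<Rightarrow> nat) \<Rightarrow> (nat set \<Rightarrow> nat)" where
  "Tm \<I> w = restrict (\<lambda>H. Min (w ` {K\<in>\<I>. K \<subseteq> H \<and> w H \<in> K})) \<I>"

lemma closed_int:
  "closed_under_intersection \<I> \<Longrightarrow> H \<in> \<I> \<Longrightarrow> K \<in> \<I> \<Longrightarrow> x \<in> H \<Longrightarrow> x \<in> K \<Longrightarrow> H \<inter> K \<in> \<I>"
  unfolding closed_under_intersection_def by blast

context
  fixes n \<I>
  assumes iv: "interval_hypergraph n \<I>" and cl: "closed_under_intersection \<I>"
begin

lemma fin: "finite \<I>" using iv_finite[OF iv] .

lemma Tm_props:
  assumes wo: "\<And>H. H \<in> \<I> \<Longrightarrow> w H \<in> H" and H: "H \<in> \<I>"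
  shows "\<exists>L\<in>\<I>. L \<subseteq> H \<and> w H \<in> L \<and> Tm \<I> w H = w L"
    "\<And>K. K \<in> \<I> \<Longrightarrow> K \<subseteq> H \<Longrightarrow> w H \<in> K \<Longrightarrow> Tm \<I> w H \<le> w K"
proof -
  let ?S = "w ` {K\<in>\<I>. K \<subseteq> H \<and> w H \<in> K}"
  have f: "finite ?S" using fin by simp
  have ne: "?S \<noteq> {}" using H wo[OF H] by blast
  have e: "Tm \<I> w H = Min ?S" unfolding Tm_def using H by simp
  have "Min ?S \<in> ?S" using f ne by simp
  thus "\<exists>L\<in>\<I>. L \<subseteq> H \<and> w H \<in> L \<and> Tm \<I> w H = w L" using e by auto
  fix K assume "K \<in> \<I>" "K \<subseteq> H" "w H \<in> K"
  hence "w K \<in> ?S" by blast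
  thus "Tm \<I> w H \<le> w K" using e f by simp
qed

lemma Tm_mem:
  assumes wo: "\<And>H. H \<in> \<I> \<Longrightarrow> w H \<in> H" and H: "H \<in> \<I>"
  shows "Tm \<I> w H \<in> H" "Tm \<I> w H \<le> w H"
proof -
  obtain L where "L\<in>\<I>" "L \<subseteq> H" "w H \<in> L" "Tm \<I> w H = w L" using Tm_props(1)[OF wo H] by blast
  thus "Tm \<I> w H \<in> H" using wo by auto
  show "Tm \<I> w H \<le> w H" using Tm_props(2)[OF wo H H] wo[OF H] by simp
qed

lemma Tm_orient:
  assumes wo: "\<And>H. H \<in> \<I> \<Longrightarrow> w H \<in> H"
  shows "Tm \<I> w \<in> orientations \<I>"
  unfolding orientations_def using Tm_mem(1)[OF wo] unfolding Tm_def by auto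

lemma Tm_SD:
  assumes wo: "\<And>H. H \<in> \<I> \<Longrightarrow> w H \<in> H" and sd: "SD \<I> w"
  shows "SD \<I> (Tm \<I> w)"
  unfolding SD_def
proof (intro ballI impI)
  fix H K assume H: "H \<in> \<I>" and K: "K \<in> \<I>" and KH: "K \<subseteq> H" and tK: "Tm \<I> w H \<in> K"
  obtain L where L: "L\<in>\<I>" "L \<subseteq> H" "w H \<in> L" "Tm \<I> w H = w L" using Tm_props(1)[OF wo H] by blast
  have wLK: "w L \<in> K" using tK L by simp
  have wLL: "w L \<in> L" using wo L by simp
  show "Tm \<I> w K \<le> Tm \<I> w H"
  proof (cases "w K \<in> L")
    case True
    have M: "K \<inter> L \<in> \<I>" using closed_int[OF cl K L(1) _ True] wo[OF K] by simp
    have "Tm \<I> w K \<le> w (K \<inter> L)" using Tm_props(2)[OF wo K M] True wo[OF K] by auto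
    also have "w (K \<inter> L) \<le> w L" using sd L M wLK wLL unfolding SD_def by blast
    finally show ?thesis using L by simp
  next
    case False
    show ?thesis
    proof (cases "w K \<le> w L")
      case True thus ?thesis using Tm_mem(2)[OF wo K] L by simp
    next
      case False
      have "w L \<le> w H" using sd H L unfolding SD_def by blast
      have "w H < w K"
      proof (rule ccontr)
        assume "\<not> w H < w K"
        hence "w K \<in> L" using iv_convex[OF iv L(1) wLL L(3), of "w K"] False by simp
        thus False using \<open>w K \<notin> L\<close> by simp
      qed
      have "w H \<in> K" using iv_convex[OF iv K wLK wo[OF K], of "w H"] \<open>w L \<le> w H\<close> \<open>w H < w K\<close> by simp
      hence "w K \<le> w H" using sd H K KH unfolding SD_def by blast
      thus ?thesis using \<open>w H < w K\<close> by simp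
    qed
  qed
qed

lemma Tm_bound:
  assumes wo: "\<And>H. H \<in> \<I> \<Longrightarrow> w H \<in> H"
    and Oo: "\<And>H. H \<in> \<I> \<Longrightarrow> P H \<in> H" and Oc: "consist \<I> P" and le: "\<forall>H\<in>\<I>. P H \<le> w H"
    and H: "H \<in> \<I>"
  shows "P H \<le> Tm \<I> w H"
proof (rule ccontr)
  assume a: "\<not> P H \<le> Tm \<I> w H"
  obtain K where K: "K\<in>\<I>" "K \<subseteq> H" "w H \<in> K" "Tm \<I> w H = w K" using Tm_props(1)[OF wo H] by blast
  have "P K \<le> w K" using le K by simp
  have "P K \<in> K" using Oo K by simp
  have "P H \<notin> K"
  proof
    assume "P H \<in> K"
    hence "P H = P K" using Oc H K \<open>P K \<in> K\<close> unfolding consist_def by blast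
    thus False using a K \<open>P K \<le> w K\<close> by simp
  qed
  have "P H < w H"
  proof (rule ccontr)
    assume "\<not> P H < w H"
    hence "P H \<in> K" using iv_convex[OF iv K(1) \<open>P K \<in> K\<close> K(3), of "P H"] a K \<open>P K \<le> w K\<close> le H by simp
    thus False using \<open>P H \<notin> K\<close> by simp
  qed
  hence "P H \<in> K" using iv_convex[OF iv K(1) \<open>P K \<in> K\<close> K(3), of "P H"] a K \<open>P K \<le> w K\<close> by simp
  thus False using \<open>P H \<notin> K\<close> by simp
qed

lemma fix_consist:
  assumes wo: "\<And>H. H \<in> \<I> \<Longrightarrow> w H \<in> H" and sd: "SD \<I> w" and fx: "\<forall>H\<in>\<I>. Tm \<I> w H = w H"
  shows "consist \<I> w"
  unfolding consist_def
proof (intro ballI impI)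
  fix H K assume H: "H \<in> \<I>" and K: "K \<in> \<I>" and a: "w H \<in> K" "w K \<in> H"
  have L: "H \<inter> K \<in> \<I>" using closed_int[OF cl H K wo[OF H] a(1)] .
  have "w H \<le> w (H \<inter> K)" using Tm_props(2)[OF wo H L] fx H a wo[OF H] by simp
  moreover have "w (H \<inter> K) \<le> w H" using sd H L a wo[OF H] unfolding SD_def by blast
  moreover have "w K \<le> w (H \<inter> K)" using Tm_props(2)[OF wo K L] fx K a wo[OF K] by auto
  moreover have "w (H \<inter> K) \<le> w K" using sd K L a wo[OF K] unfolding SD_def by blast
  ultimately show "w H = w K" by simp
qed

lemma max_below:
  "w \<in> orientations \<I> \<Longrightarrow> SD \<I> w \<Longrightarrow>
   \<exists>u\<in>orientations \<I>. consist \<I> u \<and> (\<forall>H\<in>\<I>. u H \<le> w H) \<and>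
     (\<forall>P\<in>orientations \<I>. consist \<I> P \<longrightarrow> (\<forall>H\<in>\<I>. P H \<le> w H) \<longrightarrow> (\<forall>H\<in>\<I>. P H \<le> u H))"
proof (induction "\<Sum>H\<in>\<I>. w H" arbitrary: w rule: less_induct)
  case less
  have wo: "\<And>H. H \<in> \<I> \<Longrightarrow> w H \<in> H" using less.prems(1) orient_mem by blast
  show ?case
  proof (cases "\<forall>H\<in>\<I>. Tm \<I> w H = w H")
    case True
    thus ?thesis using fix_consist[OF wo less.prems(2) True] less.prems(1) by blast
  next
    case False
    then obtain H0 where H0: "H0 \<in> \<I>" "Tm \<I> w H0 \<noteq> w H0" by blast
    have "(\<Sum>H\<in>\<I>. Tm \<I> w H) < (\<Sum>H\<in>\<I>. w H)"
    proof (rule sum_strict_mono_ex1[OF fin])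
      show "\<forall>x\<in>\<I>. Tm \<I> w x \<le> w x" using Tm_mem(2)[OF wo] by blast
      show "\<exists>a\<in>\<I>. Tm \<I> w a < w a" using H0 Tm_mem(2)[OF wo H0(1)] by (intro bexI[of _ H0]) auto
    qed
    then obtain u where u: "u\<in>orientations \<I>" "consist \<I> u" "\<forall>H\<in>\<I>. u H \<le> Tm \<I> w H"
      "\<forall>P\<in>orientations \<I>. consist \<I> P \<longrightarrow> (\<forall>H\<in>\<I>. P H \<le> Tm \<I> w H) \<longrightarrow> (\<forall>H\<in>\<I>. P H \<le> u H)"
      using less.hyps[of "Tm \<I> w"] Tm_orient[OF wo] Tm_SD[OF wo less.prems(2)] by blast
    show ?thesis
    proof (intro bexI[of _ u] conjI ballI impI)
      show "u \<in> orientations \<I>" "consist \<I> u" by fact+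
      fix H assume "H \<in> \<I>" thus "u H \<le> w H" using u(3) Tm_mem(2)[OF wo] by (meson order_trans)
    next
      fix P H assume P: "P \<in> orientations \<I>" "consist \<I> P" "\<forall>H\<in>\<I>. P H \<le> w H" and H: "H \<in> \<I>"
      have "\<forall>H\<in>\<I>. P H \<le> Tm \<I> w H" using Tm_bound[OF wo _ P(2) P(3)] orient_mem[OF P(1)] by blast
      thus "P H \<le> u H" using u(4) P H by blast
    qed
  qed
qed

lemma glb:
  assumes S: "S \<subseteq> acyclic_orientations \<I>" "S \<noteq> {}"
  shows "\<exists>m\<in>acyclic_orientations \<I>. (\<forall>u\<in>S. \<forall>H\<in>\<I>. m H \<le> u H) \<and>
     (\<forall>P\<in>acyclic_orientations \<I>. (\<forall>u\<in>S. \<forall>H\<in>\<I>. P H \<le> u H) \<longrightarrow> (\<forall>H\<in>\<I>. P H \<le> m H))"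
proof -
  have Sc: "\<And>u. u \<in> S \<Longrightarrow> u \<in> orientations \<I> \<and> consist \<I> u" using S acyc_mem_iff[OF iv] by blast
  have finS: "finite S"
  proof (rule finite_subset[OF S(1)])
    have "acyclic_orientations \<I> \<subseteq> orientations \<I>" using acyc_mem_iff[OF iv] by blast
    moreover have "finite (orientations \<I>)" unfolding orientations_def
      using fin iv_sub(3)[OF iv] by (intro finite_PiE) auto
    ultimately show "finite (acyclic_orientations \<I>)" using finite_subset by blast
  qed
  define v where "v = restrict (\<lambda>H. Min ((\<lambda>u. u H) ` S)) \<I>"
  have vv: "\<And>H. H \<in> \<I> \<Longrightarrow> v H \<in> (\<lambda>u. u H) ` S" unfolding v_def using finS S(2) by simp
  have vle: "\<And>H u. H \<in> \<I> \<Longrightarrow> u \<in> S \<Longrightarrow> v H \<le> u H" unfolding v_def using finS by simp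
  have vo: "v \<in> orientations \<I>" unfolding orientations_def
  proof
    fix H assume "H \<in> \<I>"
    then obtain u where "u \<in> S" "v H = u H" using vv by blast
    thus "v H \<in> H" using Sc orient_mem \<open>H \<in> \<I>\<close> by metis
  qed (simp add: v_def)
  have vsd: "SD \<I> v" unfolding SD_def
  proof (intro ballI impI)
    fix H K assume H: "H \<in> \<I>" "K \<in> \<I>" "K \<subseteq> H" "v H \<in> K"
    then obtain u where u: "u \<in> S" "v H = u H" using vv by blast
    have "u K \<in> H" using Sc[OF u(1)] orient_mem H by blast
    hence "u K = u H" using Sc[OF u(1)] H u unfolding consist_def by metis
    thus "v K \<le> v H" using vle[OF H(2) u(1)] u by simp
  qed
  obtain m where m: "m\<in>orientations \<I>" "consist \<I> m" "\<forall>H\<in>\<I>. m H \<le> v H"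
     "\<forall>P\<in>orientations \<I>. consist \<I> P \<longrightarrow> (\<forall>H\<in>\<I>. P H \<le> v H) \<longrightarrow> (\<forall>H\<in>\<I>. P H \<le> m H)"
    using max_below[OF vo vsd] by blast
  show ?thesis
  proof (intro bexI[of _ m] conjI ballI impI)
    show "m \<in> acyclic_orientations \<I>" using m acyc_mem_iff[OF iv] by blast
    fix u H assume "u \<in> S" "H \<in> \<I>" thus "m H \<le> u H" using m(3) vle by (meson order_trans)
  next
    fix P H assume P: "P \<in> acyclic_orientations \<I>" "\<forall>u\<in>S. \<forall>H\<in>\<I>. P H \<le> u H" and H: "H \<in> \<I>"
    have "\<forall>H\<in>\<I>. P H \<le> v H" using P(2) vv by fastforce
    thus "P H \<le> m H" using m(4) P(1) acyc_mem_iff[OF iv] H by blast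
  qed
qed

end




lemma iv_minmax:
  assumes "interval_hypergraph n \<I>" "H \<in> \<I>"
  shows "H = {Min H..Max H}" "Min H \<le> Max H"
proof -
  obtain i j where ij: "i \<le> j" "H = {i..j}" using iv_form[OF assms] by blast
  have "Min H = i" using ij by (intro Min_eqI) auto
  moreover have "Max H = j" using ij by (intro Max_eqI) auto
  ultimately show "H = {Min H..Max H}" "Min H \<le> Max H" using ij by auto
qed

lemma gen_acyc:
  fixes g :: "nat \<Rightarrow> nat \<Rightarrow> nat"
  assumes iv: "interval_hypergraph n \<I>"
    and mem: "\<And>h1 h2. h1 \<le> h2 \<Longrightarrow> h1 \<le> g h1 h2 \<and> g h1 h2 \<le> h2"
    and cs: "\<And>h1 h2 k1 k2. h1 \<le> h2 \<Longrightarrow> k1 \<le> k2 \<Longrightarrow> k1 \<le> g h1 h2 \<Longrightarrow> g h1 h2 \<le> k2 \<Longrightarrow>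
               h1 \<le> g k1 k2 \<Longrightarrow> g k1 k2 \<le> h2 \<Longrightarrow> g h1 h2 = g k1 k2"
  shows "restrict (\<lambda>H. g (Min H) (Max H)) \<I> \<in> acyclic_orientations \<I>"
proof -
  let ?P = "restrict (\<lambda>H. g (Min H) (Max H)) \<I>"
  have o: "?P \<in> orientations \<I>" unfolding orientations_def
  proof
    fix H assume H: "H \<in> \<I>"
    show "?P H \<in> H" using iv_minmax[OF iv H] mem[of "Min H" "Max H"] H
      by (metis atLeastAtMost_iff restrict_apply')
  qed simp
  have "consist \<I> ?P" unfolding consist_def
  proof (intro ballI impI)
    fix H K assume H: "H \<in> \<I>" "K \<in> \<I>" "?P H \<in> K" "?P K \<in> H"
    have eH: "H = {Min H..Max H}" "Min H \<le> Max H" using iv_minmax[OF iv H(1)] by auto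
    have eK: "K = {Min K..Max K}" "Min K \<le> Max K" using iv_minmax[OF iv H(2)] by auto
    have a1: "g (Min H) (Max H) \<in> {Min K..Max K}" using H(1,3) eK by simp
    have a2: "g (Min K) (Max K) \<in> {Min H..Max H}" using H(2,4) eH by simp
    show "?P H = ?P K" using cs[OF eH(2) eK(2)] a1 a2 H(1,2) by simp
  qed
  thus ?thesis using o acyc_mem_iff[OF iv] by simp
qed

definition gP :: "nat \<Rightarrow> nat \<Rightarrow> nat \<Rightarrow> nat" where
  "gP c h1 h2 = (if h1 \<le> c \<and> c \<le> h2 then c else h1)"
definition gQ :: "nat \<Rightarrow> nat \<Rightarrow> nat \<Rightarrow> nat \<Rightarrow> nat \<Rightarrow> nat" where
  "gQ a b c h1 h2 = (if h1 < c \<and> a \<le> h2 then max h1 a else if h1 \<le> b \<and> b \<le> h2 then b else h1)"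
definition gX :: "nat \<Rightarrow> nat \<Rightarrow> nat \<Rightarrow> nat \<Rightarrow> nat \<Rightarrow> nat" where
  "gX b c d h1 h2 = (if h1 \<le> d \<and> d \<le> h2 then d else if h2 \<le> b \<and> h1 \<le> c \<and> c \<le> h2 then c else h2)"
definition gY :: "nat \<Rightarrow> nat \<Rightarrow> nat \<Rightarrow> nat" where
  "gY b h1 h2 = (if h1 \<le> b \<and> b \<le> h2 then b else h2)"

lemma gP_ok: "h1 \<le> h2 \<Longrightarrow> h1 \<le> gP c h1 h2 \<and> gP c h1 h2 \<le> h2"
  "h1 \<le> h2 \<Longrightarrow> k1 \<le> k2 \<Longrightarrow> k1 \<le> gP c h1 h2 \<Longrightarrow> gP c h1 h2 \<le> k2 \<Longrightarrow>
   h1 \<le> gP c k1 k2 \<Longrightarrow> gP c k1 k2 \<le> h2 \<Longrightarrow> gP c h1 h2 = gP c k1 k2"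
  unfolding gP_def by (auto split: if_splits)

lemma gQ_ok: "a < c \<Longrightarrow> c < b \<Longrightarrow> h1 \<le> h2 \<Longrightarrow> h1 \<le> gQ a b c h1 h2 \<and> gQ a b c h1 h2 \<le> h2"
  "a < c \<Longrightarrow> c < b \<Longrightarrow> h1 \<le> h2 \<Longrightarrow> k1 \<le> k2 \<Longrightarrow> k1 \<le> gQ a b c h1 h2 \<Longrightarrow> gQ a b c h1 h2 \<le> k2 \<Longrightarrow>
   h1 \<le> gQ a b c k1 k2 \<Longrightarrow> gQ a b c k1 k2 \<le> h2 \<Longrightarrow> gQ a b c h1 h2 = gQ a b c k1 k2"
  unfolding gQ_def by (auto split: if_splits)

lemma gX_ok: "c < b \<Longrightarrow> b < d \<Longrightarrow> h1 \<le> h2 \<Longrightarrow> h1 \<le> gX b c d h1 h2 \<and> gX b c d h1 h2 \<le> h2"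
  "c < b \<Longrightarrow> b < d \<Longrightarrow> h1 \<le> h2 \<Longrightarrow> k1 \<le> k2 \<Longrightarrow> k1 \<le> gX b c d h1 h2 \<Longrightarrow> gX b c d h1 h2 \<le> k2 \<Longrightarrow>
   h1 \<le> gX b c d k1 k2 \<Longrightarrow> gX b c d k1 k2 \<le> h2 \<Longrightarrow> gX b c d h1 h2 = gX b c d k1 k2"
  unfolding gX_def by (auto split: if_splits)

lemma gY_ok: "h1 \<le> h2 \<Longrightarrow> h1 \<le> gY b h1 h2 \<and> gY b h1 h2 \<le> h2"
  "h1 \<le> h2 \<Longrightarrow> k1 \<le> k2 \<Longrightarrow> k1 \<le> gY b h1 h2 \<Longrightarrow> gY b h1 h2 \<le> k2 \<Longrightarrow>
   h1 \<le> gY b k1 k2 \<Longrightarrow> gY b k1 k2 \<le> h2 \<Longrightarrow> gY b h1 h2 = gY b k1 k2"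
  unfolding gY_def by (auto split: if_splits)

lemma cmp:
  assumes "a < c" "c < b" "b < d" "h1 \<le> h2"
  shows "gP c h1 h2 \<le> gX b c d h1 h2" "gP c h1 h2 \<le> gY b h1 h2" "gQ a b c h1 h2 \<le> gY b h1 h2"
    "\<not> (h1 = c \<and> h2 = b) \<Longrightarrow> gQ a b c h1 h2 \<le> gX b c d h1 h2"
  using assms unfolding gP_def gQ_def gX_def gY_def by (auto split: if_splits)




lemma Min_Max_ivl: "i \<le> j \<Longrightarrow> Min {i..j} = (i::nat) \<and> Max {i..j} = j"
  by (auto intro!: Min_eqI Max_eqI)

lemma not_lattice:
  assumes iv: "interval_hypergraph n \<I>" and I: "{a..b} \<in> \<I>" and J: "{c..d} \<in> \<I>"
    and o: "a < c" "c < b" "b < d" and nI: "{c..b} \<notin> \<I>"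
  shows "\<not> is_lattice_on (acyclic_orientations \<I>) (hg_le n \<I>)"
proof
  assume L: "is_lattice_on (acyclic_orientations \<I>) (hg_le n \<I>)"
  let ?A = "acyclic_orientations \<I>"
  define P where "P = restrict (\<lambda>H. gP c (Min H) (Max H)) \<I>"
  define Q where "Q = restrict (\<lambda>H. gQ a b c (Min H) (Max H)) \<I>"
  define X where "X = restrict (\<lambda>H. gX b c d (Min H) (Max H)) \<I>"
  define Y where "Y = restrict (\<lambda>H. gY b (Min H) (Max H)) \<I>"
  have PA: "P \<in> ?A" unfolding P_def by (rule gen_acyc[OF iv gP_ok(1) gP_ok(2)])
  have QA: "Q \<in> ?A" unfolding Q_def by (rule gen_acyc[OF iv gQ_ok(1)[OF o(1,2)] gQ_ok(2)[OF o(1,2)]])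
  have XA: "X \<in> ?A" unfolding X_def by (rule gen_acyc[OF iv gX_ok(1)[OF o(2,3)] gX_ok(2)[OF o(2,3)]])
  have YA: "Y \<in> ?A" unfolding Y_def by (rule gen_acyc[OF iv gY_ok(1) gY_ok(2)])
  have PX: "hg_le n \<I> P X" unfolding hg_le_iff[OF iv PA XA]
  proof
    fix H assume H: "H \<in> \<I>"
    show "P H \<le> X H" using cmp(1)[OF o iv_minmax(2)[OF iv H]] H unfolding P_def X_def by simp
  qed
  have PY: "hg_le n \<I> P Y" unfolding hg_le_iff[OF iv PA YA]
  proof
    fix H assume H: "H \<in> \<I>"
    show "P H \<le> Y H" using cmp(2)[OF o iv_minmax(2)[OF iv H]] H unfolding P_def Y_def by simp
  qed
  have QY: "hg_le n \<I> Q Y" unfolding hg_le_iff[OF iv QA YA]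
  proof
    fix H assume H: "H \<in> \<I>"
    show "Q H \<le> Y H" using cmp(3)[OF o iv_minmax(2)[OF iv H]] H unfolding Q_def Y_def by simp
  qed
  have QX: "hg_le n \<I> Q X" unfolding hg_le_iff[OF iv QA XA]
  proof
    fix H assume H: "H \<in> \<I>"
    have "\<not> (Min H = c \<and> Max H = b)"
    proof
      assume "Min H = c \<and> Max H = b"
      hence "H = {c..b}" using iv_minmax(1)[OF iv H] by simp
      thus False using H nI by simp
    qed
    thus "Q H \<le> X H" using cmp(4)[OF o iv_minmax(2)[OF iv H]] H unfolding Q_def X_def by simp
  qed
  obtain s where s: "s \<in> ?A" "hg_le n \<I> P s" "hg_le n \<I> Q s"
    "\<forall>u\<in>?A. hg_le n \<I> P u \<longrightarrow> hg_le n \<I> Q u \<longrightarrow> hg_le n \<I> s u"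
  proof -
    have "\<forall>x\<in>?A. \<forall>y\<in>?A. \<exists>s\<in>?A. hg_le n \<I> x s \<and> hg_le n \<I> y s \<and> (\<forall>u\<in>?A. hg_le n \<I> x u \<longrightarrow> hg_le n \<I> y u \<longrightarrow> hg_le n \<I> s u)"
      using L unfolding is_lattice_on_def by (elim conjE)
    hence "\<exists>s\<in>?A. hg_le n \<I> P s \<and> hg_le n \<I> Q s \<and> (\<forall>u\<in>?A. hg_le n \<I> P u \<longrightarrow> hg_le n \<I> Q u \<longrightarrow> hg_le n \<I> s u)"
      using PA QA by blast
    thus ?thesis using that by blast
  qed
  have sX: "\<forall>H\<in>\<I>. s H \<le> X H" using s(4) XA PX QX hg_le_iff[OF iv s(1) XA] by blast
  have sY: "\<forall>H\<in>\<I>. s H \<le> Y H" using s(4) YA PY QY hg_le_iff[OF iv s(1) YA] by blast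
  have Ps: "\<forall>H\<in>\<I>. P H \<le> s H" using s(2) hg_le_iff[OF iv PA s(1)] by blast
  have Qs: "\<forall>H\<in>\<I>. Q H \<le> s H" using s(3) hg_le_iff[OF iv QA s(1)] by blast
  have mI: "Min {a..b} = a \<and> Max {a..b} = b" using Min_Max_ivl o by simp
  have mJ: "Min {c..d} = c \<and> Max {c..d} = d" using Min_Max_ivl o by simp
  have "P {a..b} = c" using I mI o unfolding P_def gP_def by simp
  moreover have "X {a..b} = c" using I mI o unfolding X_def gX_def by simp
  ultimately have sI: "s {a..b} = c" using Ps sX I by (metis le_antisym)
  have "Q {c..d} = b" using J mJ o unfolding Q_def gQ_def by simp
  moreover have "Y {c..d} = b" using J mJ o unfolding Y_def gY_def by simp
  ultimately have sJ: "s {c..d} = b" using Qs sY J by (metis le_antisym)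
  have "consist \<I> s" using s(1) acyc_mem_iff[OF iv] by blast
  moreover have "s {a..b} \<in> {c..d}" "s {c..d} \<in> {a..b}" using sI sJ o by auto
  ultimately have "s {a..b} = s {c..d}" using I J unfolding consist_def by blast
  thus False using sI sJ o by simp
qed




lemma not_lattice2:
  assumes iv: "interval_hypergraph n \<I>" and sg: "contains_singletons n \<I>"
    and I: "{a1..b1} \<in> \<I>" and J: "{a2..b2} \<in> \<I>" and le: "a1 \<le> b1" "a2 \<le> b2" "1 \<le> a1" "b2 \<le> n"
    and ne: "{a1..b1} \<inter> {a2..b2} \<noteq> {}" and nI: "{a1..b1} \<inter> {a2..b2} \<notin> \<I>" and lt: "a1 < a2"
  shows "\<not> is_lattice_on (acyclic_orientations \<I>) (hg_le n \<I>)"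
proof -
  have "b1 < b2"
  proof (rule ccontr)
    assume "\<not> b1 < b2"
    hence "{a1..b1} \<inter> {a2..b2} = {a2..b2}" using lt le by auto
    thus False using nI J by metis
  qed
  have "a2 \<le> b1" using ne by auto
  have eq: "{a1..b1} \<inter> {a2..b2} = {a2..b1}" using lt le \<open>b1 < b2\<close> by auto
  have "a2 \<noteq> b1"
  proof
    assume "a2 = b1"
    hence "{a1..b1} \<inter> {a2..b2} = {a2}" using eq by simp
    moreover have "{a2} \<in> \<I>" using sg le lt unfolding contains_singletons_def by auto
    ultimately show False using nI by metis
  qed
  hence "a2 < b1" using \<open>a2 \<le> b1\<close> by simp
  have "{a2..b1} \<notin> \<I>" using nI eq by metis
  thus ?thesis using not_lattice[OF iv I J lt \<open>a2 < b1\<close> \<open>b1 < b2\<close>] by blast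
qed

lemma lattice_imp_closed:
  assumes iv: "interval_hypergraph n \<I>" and sg: "contains_singletons n \<I>"
    and L: "is_lattice_on (acyclic_orientations \<I>) (hg_le n \<I>)"
  shows "closed_under_intersection \<I>"
  unfolding closed_under_intersection_def
proof (intro ballI impI)
  fix I J assume I: "I \<in> \<I>" and J: "J \<in> \<I>" and ne: "I \<inter> J \<noteq> {}"
  show "I \<inter> J \<in> \<I>"
  proof (rule ccontr)
    assume nI: "I \<inter> J \<notin> \<I>"
    obtain a1 b1 where i1: "1 \<le> a1" "a1 \<le> b1" "b1 \<le> n" "I = {a1..b1}" using iv_form[OF iv I] by blast
    obtain a2 b2 where i2: "1 \<le> a2" "a2 \<le> b2" "b2 \<le> n" "J = {a2..b2}" using iv_form[OF iv J] by blast
    consider "a1 < a2" | "a2 < a1" | "a1 = a2" by linarith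
    thus False
    proof cases
      case 1 thus False using not_lattice2[OF iv sg, of a1 b1 a2 b2] i1 i2 I J ne nI L by simp
    next
      case 2 thus False using not_lattice2[OF iv sg, of a2 b2 a1 b1] i1 i2 I J ne nI L by (simp add: Int_commute)
    next
      case 3
      hence "I \<inter> J = I \<or> I \<inter> J = J" using i1 i2 by (cases "b1 \<le> b2") auto
      thus False using nI I J by auto
    qed
  qed
qed



lemma top_acyc:
  assumes iv: "interval_hypergraph n \<I>"
  shows "restrict (\<lambda>H. Max H) \<I> \<in> acyclic_orientations \<I>"
proof -
  have m: "\<And>h1 h2::nat. h1 \<le> h2 \<Longrightarrow> h1 \<le> h2 \<and> h2 \<le> h2" by simp
  have c: "\<And>h1 h2 k1 k2::nat. h1 \<le> h2 \<Longrightarrow> k1 \<le> k2 \<Longrightarrow> k1 \<le> h2 \<Longrightarrow> h2 \<le> k2 \<Longrightarrow>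
               h1 \<le> k2 \<Longrightarrow> k2 \<le> h2 \<Longrightarrow> h2 = k2" by simp
  show ?thesis using gen_acyc[OF iv m c] by simp
qed

lemma closed_imp_lattice:
  assumes iv: "interval_hypergraph n \<I>" and cl: "closed_under_intersection \<I>"
  shows "is_lattice_on (acyclic_orientations \<I>) (hg_le n \<I>)"
proof -
  let ?A = "acyclic_orientations \<I>"
  have Ao: "\<And>P. P \<in> ?A \<Longrightarrow> P \<in> orientations \<I>" using acyc_mem_iff[OF iv] by blast
  define T where "T = restrict (\<lambda>H. Max H) \<I>"
  have TA: "T \<in> ?A" unfolding T_def using top_acyc[OF iv] .
  have leT: "\<And>P. P \<in> ?A \<Longrightarrow> \<forall>H\<in>\<I>. P H \<le> T H"
  proof
    fix P H assume P: "P \<in> ?A" and H: "H \<in> \<I>"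
    have "P H \<in> H" using orient_mem[OF Ao[OF P] H] .
    thus "P H \<le> T H" unfolding T_def using H iv_sub(3)[OF iv H] by simp
  qed
  show ?thesis unfolding is_lattice_on_def
  proof (intro conjI ballI impI)
    fix x assume "x \<in> ?A" thus "hg_le n \<I> x x" unfolding hg_le_def by simp
  next
    fix x y z assume A: "x \<in> ?A" "y \<in> ?A" "z \<in> ?A" and l: "hg_le n \<I> x y" "hg_le n \<I> y z"
    have "\<forall>H\<in>\<I>. x H \<le> y H" "\<forall>H\<in>\<I>. y H \<le> z H" using l hg_le_iff[OF iv A(1) A(2)] hg_le_iff[OF iv A(2) A(3)] by auto
    hence "\<forall>H\<in>\<I>. x H \<le> z H" using order_trans by blast
    thus "hg_le n \<I> x z" using hg_le_iff[OF iv A(1) A(3)] by simp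
  next
    fix x y assume A: "x \<in> ?A" "y \<in> ?A" and l: "hg_le n \<I> x y" "hg_le n \<I> y x"
    have "\<forall>H\<in>\<I>. x H \<le> y H" "\<forall>H\<in>\<I>. y H \<le> x H" using l hg_le_iff[OF iv A(1) A(2)] hg_le_iff[OF iv A(2) A(1)] by auto
    hence "\<forall>H\<in>\<I>. x H = y H" using order_antisym by blast
    thus "x = y" using orient_ext Ao A by blast
  next
    fix x y assume A: "x \<in> ?A" "y \<in> ?A"
    define S where "S = {u\<in>?A. hg_le n \<I> x u \<and> hg_le n \<I> y u}"
    have "hg_le n \<I> x T" "hg_le n \<I> y T" using hg_le_iff[OF iv A(1) TA] hg_le_iff[OF iv A(2) TA] leT A by auto
    hence "T \<in> S" unfolding S_def using TA by blast
    hence SA: "S \<subseteq> ?A" "S \<noteq> {}" unfolding S_def by auto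
    then obtain m where m: "m\<in>?A" "\<forall>u\<in>S. \<forall>H\<in>\<I>. m H \<le> u H"
      "\<forall>P\<in>?A. (\<forall>u\<in>S. \<forall>H\<in>\<I>. P H \<le> u H) \<longrightarrow> (\<forall>H\<in>\<I>. P H \<le> m H)"
      using glb[OF iv cl SA] by (elim bexE conjE) blast
    have "\<forall>u\<in>S. \<forall>H\<in>\<I>. x H \<le> u H"
    proof (intro ballI)
      fix u H assume "u \<in> S" "H \<in> \<I>"
      hence "u \<in> ?A" "hg_le n \<I> x u" unfolding S_def by auto
      thus "x H \<le> u H" using hg_le_iff[OF iv A(1) \<open>u \<in> ?A\<close>] \<open>H \<in> \<I>\<close> by simp
    qed
    hence "\<forall>H\<in>\<I>. x H \<le> m H" using m(3) A(1) by simp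
    hence xm: "hg_le n \<I> x m" using hg_le_iff[OF iv A(1) m(1)] by simp
    have "\<forall>u\<in>S. \<forall>H\<in>\<I>. y H \<le> u H"
    proof (intro ballI)
      fix u H assume "u \<in> S" "H \<in> \<I>"
      hence "u \<in> ?A" "hg_le n \<I> y u" unfolding S_def by auto
      thus "y H \<le> u H" using hg_le_iff[OF iv A(2) \<open>u \<in> ?A\<close>] \<open>H \<in> \<I>\<close> by simp
    qed
    hence "\<forall>H\<in>\<I>. y H \<le> m H" using m(3) A(2) by simp
    hence ym: "hg_le n \<I> y m" using hg_le_iff[OF iv A(2) m(1)] by simp
    have "\<forall>u\<in>?A. hg_le n \<I> x u \<longrightarrow> hg_le n \<I> y u \<longrightarrow> hg_le n \<I> m u"
    proof (intro ballI impI)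
      fix u assume "u \<in> ?A" "hg_le n \<I> x u" "hg_le n \<I> y u"
      hence "u \<in> S" unfolding S_def by simp
      thus "hg_le n \<I> m u" using m(2) hg_le_iff[OF iv m(1)] \<open>u \<in> ?A\<close> by blast
    qed
    thus "\<exists>s\<in>?A. hg_le n \<I> x s \<and> hg_le n \<I> y s \<and> (\<forall>u\<in>?A. hg_le n \<I> x u \<longrightarrow> hg_le n \<I> y u \<longrightarrow> hg_le n \<I> s u)"
      using xm ym m(1) by blast
  next
    fix x y assume A: "x \<in> ?A" "y \<in> ?A"
    have SA: "{x, y} \<subseteq> ?A" "{x, y} \<noteq> {}" using A by auto
    then obtain m where m: "m\<in>?A" "\<forall>u\<in>{x,y}. \<forall>H\<in>\<I>. m H \<le> u H"
      "\<forall>P\<in>?A. (\<forall>u\<in>{x,y}. \<forall>H\<in>\<I>. P H \<le> u H) \<longrightarrow> (\<forall>H\<in>\<I>. P H \<le> m H)"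
      using glb[OF iv cl SA] by (elim bexE conjE) blast
    have mx: "hg_le n \<I> m x" "hg_le n \<I> m y" using m(2) hg_le_iff[OF iv m(1) A(1)] hg_le_iff[OF iv m(1) A(2)] by auto
    have "\<forall>u\<in>?A. hg_le n \<I> u x \<longrightarrow> hg_le n \<I> u y \<longrightarrow> hg_le n \<I> u m"
    proof (intro ballI impI)
      fix u assume u: "u \<in> ?A" "hg_le n \<I> u x" "hg_le n \<I> u y"
      hence "\<forall>v\<in>{x,y}. \<forall>H\<in>\<I>. u H \<le> v H" using hg_le_iff[OF iv u(1) A(1)] hg_le_iff[OF iv u(1) A(2)] by auto
      thus "hg_le n \<I> u m" using m(3) u(1) hg_le_iff[OF iv u(1) m(1)] by blast
    qed
    thus "\<exists>m\<in>?A. hg_le n \<I> m x \<and> hg_le n \<I> m y \<and> (\<forall>u\<in>?A. hg_le n \<I> u x \<longrightarrow> hg_le n \<I> u y \<longrightarrow> hg_le n \<I> u m)"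
      using mx m(1) by blast
  qed
qed


theorem theoremA:
  fixes n :: nat and \<I> :: "nat set set"
  assumes "n \<ge> 1"
    and "interval_hypergraph n \<I>"
    and "contains_singletons n \<I>"
  shows "hypergraphic_poset_is_lattice n \<I> \<longleftrightarrow> closed_under_intersection \<I>"
  unfolding hypergraphic_poset_is_lattice_def
  using lattice_imp_closed[OF assms(2,3)] closed_imp_lattice[OF assms(2)] by blast

end
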